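(* Let $0<p_1<p_2\le\infty$, $q_1,q_2\in[1,\infty]$ with $\min\{p_2,q_2\}<\infty$. Then the embedding operator $I\colon\ell^{p_1,q_1}\to\ell^{p_2,q_2}$ is maximally non-compact, i.e. $\alpha(I)=\|I\|$.
   Context: For a scalar sequence $a=(a_n)$, its decreasing rearrangement is $a^*_n=\inf\{\omega>0:\#\{k:|a_k|>\omega\}\le n-1\}$. For $p,q\in(0,\infty]$, the Lorentz sequence space $\ell^{p,q}$ consists of all sequences $a$ with $\|a\|_{p,q}<\infty$, where $\|a\|_{p,q}=\big(\sum_{n=1}^\infty (a_n^* )^q n^{q/p-1}\big)^{1/q}$ if $q<\infty$, and $\|a\|_{p,\infty}=\sup_{n}n^{1/p}a_n^*$; convention $1/\infty=0$. For a bounded map $T\colon X\to Y$ with closed unit balls $B_X,B_Y$, the ball measure of non-compactness is $\alpha(T)=\inf\{r>0:\ T(B_X)\subset\bigcup_{i=1}^m (y_i+rB_Y)\text{ for some } m\in\mathbb{N},\ y_i\in Y\}$, $\|T\|=\sup_{x\in B_X}\|Tx\|$, and $T$ is maximally non-compact if $\alpha(T)=\|T\|$. *)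

theory Defs
  imports "HOL-Analysis.Analysis"
begin

definition inv_exp :: "ereal \<Rightarrow> real" where
  "inv_exp p = (if p = \<infinity> then 0 else 1 / real_of_ereal p)"

text \<open>Decreasing rearrangement, for n \<ge> 1 (only meaningful for bounded sequences;
  unbounded sequences get Lorentz norm infinity below, corresponding to a*_1 = infinity).\<close>
definition dec_rearr :: "(nat \<Rightarrow> real) \<Rightarrow> nat \<Rightarrow> real" where
  "dec_rearr a n = Inf {\<omega>::real. \<omega> > 0 \<and> finite {k. \<bar>a k\<bar> > \<omega>} \<and>
                                  card {k. \<bar>a k\<bar> > \<omega>} \<le> n - 1}"

definition lorentz_norm :: "ereal \<Rightarrow> ereal \<Rightarrow> (nat \<Rightarrow> real) \<Rightarrow> ennreal" where
  "lorentz_norm p q a =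
     (if \<not> bdd_above (range (\<lambda>k. \<bar>a k\<bar>)) then \<infinity>
      else if q = \<infinity> then
        (SUP n\<in>{1..}. ennreal (real n powr inv_exp p * dec_rearr a n))
      else
        (let qr = real_of_ereal q;
             s = (\<Sum>n. ennreal (dec_rearr a (Suc n) powr qr *
                                   real (Suc n) powr (qr * inv_exp p - 1)))
         in if s = \<infinity> then \<infinity> else ennreal (enn2real s powr (1 / qr))))"

definition lorentz_space :: "ereal \<Rightarrow> ereal \<Rightarrow> (nat \<Rightarrow> real) set" where
  "lorentz_space p q = {a. lorentz_norm p q a < \<infinity>}"

definition lorentz_ball :: "ereal \<Rightarrow> ereal \<Rightarrow> (nat \<Rightarrow> real) set" where
  "lorentz_ball p q = {a. lorentz_norm p q a \<le> 1}"

definition emb_norm :: "ereal \<Rightarrow> ereal \<Rightarrow> ereal \<Rightarrow> ereal \<Rightarrow> ennreal" where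
  "emb_norm p1 q1 p2 q2 = (SUP a\<in>lorentz_ball p1 q1. lorentz_norm p2 q2 a)"

definition emb_alpha :: "ereal \<Rightarrow> ereal \<Rightarrow> ereal \<Rightarrow> ereal \<Rightarrow> ennreal" where
  "emb_alpha p1 q1 p2 q2 = Inf {ennreal r | r. r > 0 \<and>
      (\<exists>F. finite F \<and> F \<noteq> {} \<and> F \<subseteq> lorentz_space p2 q2 \<and>
         lorentz_ball p1 q1 \<subseteq> (\<Union>y\<in>F. {x. lorentz_norm p2 q2 (x - y) \<le> ennreal r}))}"

end

theory Submission
  imports Defs
begin

definition bddA :: "(nat \<Rightarrow> real) \<Rightarrow> bool" where
  "bddA a \<longleftrightarrow> bdd_above (range (\<lambda>k. \<bar>a k\<bar>))"

lemma dec_ne: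
  assumes "bddA a"
  shows "\<exists>\<omega>. \<omega> > 0 \<and> finite {k. \<bar>a k\<bar> > \<omega>} \<and> card {k. \<bar>a k\<bar> > \<omega>} \<le> n - 1"
proof -
  obtain B where B: "\<And>k. \<bar>a k\<bar> \<le> B" using assms unfolding bddA_def bdd_above_def by auto
  have "\<bar>a k\<bar> \<le> max B 0 + 1" for k using B[of k] by linarith
  then have "{k. \<bar>a k\<bar> > max B 0 + 1} = {}" by (auto simp: not_less)
  then show ?thesis by (intro exI[of _ "max B 0 + 1"]) auto
qed

lemma dec_lower:
  assumes "bddA a"
    and "\<And>\<omega>. \<omega> > 0 \<Longrightarrow> finite {k. \<bar>a k\<bar> > \<omega>} \<Longrightarrow> card {k. \<bar>a k\<bar> > \<omega>} \<le> n - 1 \<Longrightarrow> c \<le> \<omega>"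
  shows "c \<le> dec_rearr a n"
  unfolding dec_rearr_def
  apply (rule cInf_greatest)
  using dec_ne[OF assms(1), of n] assms(2) by auto

lemma dec_nonneg: "bddA a \<Longrightarrow> 0 \<le> dec_rearr a n"
  by (rule dec_lower) auto

lemma dec_upper:
  assumes "\<omega> > 0" "finite {k. \<bar>a k\<bar> > \<omega>}" "card {k. \<bar>a k\<bar> > \<omega>} \<le> n - 1"
  shows "dec_rearr a n \<le> \<omega>"
  unfolding dec_rearr_def
  apply (rule cInf_lower)
  using assms by (auto intro!: bdd_belowI[of _ 0])

lemma norm_unbdd: "\<not> bddA a \<Longrightarrow> lorentz_norm p q a = \<infinity>"
  unfolding lorentz_norm_def bddA_def by simp

lemma fin_bdd: "lorentz_norm p q a < \<infinity> \<Longrightarrow> bddA a"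
  using norm_unbdd by force

definition shiftN :: "nat \<Rightarrow> (nat \<Rightarrow> real) \<Rightarrow> nat \<Rightarrow> real" where
  "shiftN N x k = (if k < N then 0 else x (k - N))"

lemma shift_bdd: "bddA (shiftN N x) \<longleftrightarrow> bddA x"
proof
  assume "bddA (shiftN N x)"
  then obtain B where B: "\<And>k. \<bar>shiftN N x k\<bar> \<le> B" unfolding bddA_def bdd_above_def by auto
  have "\<bar>x j\<bar> \<le> B" for j using B[of "j + N"] by (simp add: shiftN_def)
  then show "bddA x" unfolding bddA_def by (auto intro!: bdd_aboveI)
next
  assume "bddA x"
  then obtain B where B: "\<And>k. \<bar>x k\<bar> \<le> B" unfolding bddA_def bdd_above_def by auto
  have "\<bar>shiftN N x j\<bar> \<le> max B 0" for j using B[of "j - N"] B[of 0] by (auto simp: shiftN_def)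
  then show "bddA (shiftN N x)" unfolding bddA_def by (auto intro!: bdd_aboveI)
qed

lemma shift_set: "\<omega> > 0 \<Longrightarrow> {k. \<bar>shiftN N x k\<bar> > \<omega>} = (\<lambda>j. j + N) ` {j. \<bar>x j\<bar> > \<omega>}"
  by (auto simp: shiftN_def image_iff intro!: exI[of _ "_ - N"])

lemma shift_dec: "dec_rearr (shiftN N x) n = dec_rearr x n"
proof -
  have "\<omega> > 0 \<Longrightarrow> finite {k. \<bar>shiftN N x k\<bar> > \<omega>} = finite {k. \<bar>x k\<bar> > \<omega>} \<and>
      card {k. \<bar>shiftN N x k\<bar> > \<omega>} = card {k. \<bar>x k\<bar> > \<omega>}" for \<omega>
    unfolding shift_set by (simp add: finite_image_iff card_image inj_on_def)
  then show ?thesis unfolding dec_rearr_def by (intro arg_cong[where f=Inf]) auto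
qed

lemma shift_norm: "lorentz_norm p q (shiftN N x) = lorentz_norm p q x"
  using shift_bdd[of N x] unfolding lorentz_norm_def bddA_def shift_dec by simp


lemma ie_nonneg: "0 < p \<Longrightarrow> 0 \<le> inv_exp p"
  by (cases p) (auto simp: inv_exp_def)

lemma ie_pos: "0 < p \<Longrightarrow> p \<noteq> \<infinity> \<Longrightarrow> 0 < inv_exp p"
  by (cases p) (auto simp: inv_exp_def)

lemma q_real: "1 \<le> q \<Longrightarrow> q \<noteq> \<infinity> \<Longrightarrow> 1 \<le> real_of_ereal q"
  by (cases q) auto

lemma tail_finite:
  assumes fin: "lorentz_norm p q y < \<infinity>" and p: "0 < p" and q: "1 \<le> q"
    and m: "min p q < \<infinity>" and e: "0 < e"
  shows "finite {k. e < \<bar>y k\<bar>}"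
proof (rule ccontr)
  assume inf: "infinite {k. e < \<bar>y k\<bar>}"
  have b: "bddA y" using fin by (rule fin_bdd)
  have D: "e \<le> dec_rearr y n" for n
  proof (rule dec_lower[OF b])
    fix \<omega> :: real assume "0 < \<omega>" "finite {k. \<omega> < \<bar>y k\<bar>}"
    show "e \<le> \<omega>"
    proof (rule ccontr)
      assume "\<not> e \<le> \<omega>"
      then have "{k. e < \<bar>y k\<bar>} \<subseteq> {k. \<omega> < \<bar>y k\<bar>}" by auto
      with \<open>finite {k. \<omega> < \<bar>y k\<bar>}\<close> inf show False using finite_subset by blast
    qed
  qed
  show False
  proof (cases "q = \<infinity>")
    case True
    then have pf: "p \<noteq> \<infinity>" using m by auto
    define ie where "ie = inv_exp p"
    have ie: "0 < ie" using ie_pos[OF p pf] ie_def by simp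
    have N: "lorentz_norm p q y = (SUP n\<in>{1..}. ennreal (real n powr ie * dec_rearr y n))"
      using b True unfolding lorentz_norm_def bddA_def ie_def by simp
    obtain R where R: "lorentz_norm p q y = ennreal R" "0 \<le> R"
      using fin by (cases "lorentz_norm p q y") auto
    define t where "t = (R / e + 1) powr (1 / ie)"
    define n where "n = nat \<lceil>t\<rceil> + 1"
    have t0: "0 < t" unfolding t_def using R e by (smt (verit) divide_nonneg_pos powr_gt_zero)
    have n1: "n \<in> {1..}" unfolding n_def by simp
    have tn: "t \<le> real n" unfolding n_def by linarith
    have "R / e + 1 = t powr ie" unfolding t_def using ie R e
      by (simp add: powr_powr add_nonneg_nonneg)
    also have "\<dots> \<le> real n powr ie" using tn t0 ie by (intro powr_mono2) auto
    finally have "R / e + 1 \<le> real n powr ie" .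
    then have "(R / e + 1) * e \<le> real n powr ie * e" using e by (intro mult_right_mono) auto
    also have "\<dots> \<le> real n powr ie * dec_rearr y n" using D[of n] by (intro mult_left_mono) auto
    finally have big0: "(R / e + 1) * e \<le> real n powr ie * dec_rearr y n" .
    have "(R / e + 1) * e = R + e" using e by (simp add: field_simps)
    then have big: "R < real n powr ie * dec_rearr y n" using big0 e by linarith
    have "ennreal (real n powr ie * dec_rearr y n) \<le> lorentz_norm p q y"
      unfolding N using n1 by (rule SUP_upper)
    then have "real n powr ie * dec_rearr y n \<le> R" using R by (simp add: ennreal_le_iff)
    then show False using big by simp
  next
    case False
    define qr where "qr = real_of_ereal q"
    have qr: "1 \<le> qr" using q_real[OF q False] qr_def by simp
    define ie where "ie = inv_exp p"
    have ie: "0 \<le> ie" using ie_nonneg[OF p] ie_def by simp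
    define s where "s = (\<Sum>n. ennreal (dec_rearr y (Suc n) powr qr * real (Suc n) powr (qr * ie - 1)))"
    have "(\<Sum>n. ennreal (e powr qr * inverse (real (Suc n)))) = top"
    proof (rule summable_iff_suminf_neq_top)
      show "\<not> summable (\<lambda>n. e powr qr * inverse (real (Suc n)))"
      proof
        assume "summable (\<lambda>n. e powr qr * inverse (real (Suc n)))"
        then have "summable (\<lambda>n. inverse (e powr qr) * (e powr qr * inverse (real (Suc n))))"
          by (rule summable_mult)
        then have "summable (\<lambda>n. inverse (real (Suc n)))" using e by simp
        then have "summable (\<lambda>n. inverse (real n))" using summable_Suc_iff[of "\<lambda>n. inverse (real n)"] by simp
        then show False using not_summable_harmonic[where 'a=real] by simp
      qed
    qed (use e in auto)
    moreover have "(\<Sum>n. ennreal (e powr qr * inverse (real (Suc n)))) \<le> s"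
      unfolding s_def
    proof (intro suminf_le summableI ennreal_leI mult_mono)
      fix n
      show "e powr qr \<le> dec_rearr y (Suc n) powr qr" using D e qr by (intro powr_mono2) auto
      have "inverse (real (Suc n)) = real (Suc n) powr (-1)" by (simp add: powr_neg_one divide_inverse)
      also have "\<dots> \<le> real (Suc n) powr (qr * ie - 1)" using qr ie by (intro powr_mono) auto
      finally show "inverse (real (Suc n)) \<le> real (Suc n) powr (qr * ie - 1)" .
    qed (use e in auto)
    ultimately have "s = top" by (simp add: top_unique)
    then have "lorentz_norm p q y = \<infinity>"
      using b False unfolding lorentz_norm_def bddA_def s_def qr_def ie_def by (simp add: Let_def)
    then show False using fin by simp
  qed
qed


lemma aux_half: "x - e \<le> y \<Longrightarrow> x - e = (x + u) / 2 \<Longrightarrow> u < x \<Longrightarrow> u < (y::real)"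
  by (simp add: field_simps)

lemma lsc:
  assumes ba: "bddA a" and gt: "ennreal r < lorentz_norm p q a" and r: "0 < r" and q: "1 \<le> q"
  shows "\<exists>\<epsilon>>0. \<forall>b. bddA b \<longrightarrow> (\<forall>n\<ge>1. dec_rearr a n - \<epsilon> \<le> dec_rearr b n)
            \<longrightarrow> ennreal r < lorentz_norm p q b"
proof (cases "q = \<infinity>")
  case True
  define ie where "ie = inv_exp p"
  have N: "\<And>b. bddA b \<Longrightarrow> lorentz_norm p q b = (SUP n\<in>{1..}. ennreal (real n powr ie * dec_rearr b n))"
    using True unfolding lorentz_norm_def bddA_def ie_def by simp
  obtain n where n: "n \<in> {1..}" "ennreal r < ennreal (real n powr ie * dec_rearr a n)"
    using gt unfolding N[OF ba] less_SUP_iff by blast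
  define c where "c = real n powr ie"
  have c: "0 < c" using n(1) unfolding c_def by simp
  have rc: "r < c * dec_rearr a n" using n(2) r unfolding c_def by (simp add: ennreal_less_iff)
  then have rc': "r / c < dec_rearr a n" using c by (simp add: pos_divide_less_eq mult.commute)
  define \<epsilon> where "\<epsilon> = (dec_rearr a n - r / c) / 2"
  have e: "0 < \<epsilon>" using rc' unfolding \<epsilon>_def by simp
  show ?thesis
  proof (intro exI[of _ \<epsilon>] conjI allI impI e)
    fix b assume bb: "bddA b" and le: "\<forall>n\<ge>1. dec_rearr a n - \<epsilon> \<le> dec_rearr b n"
    have "dec_rearr a n - \<epsilon> \<le> dec_rearr b n" using le n(1) by auto
    moreover have "dec_rearr a n - \<epsilon> = (dec_rearr a n + r / c) / 2" unfolding \<epsilon>_def by (simp add: field_simps)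
    ultimately have "r / c < dec_rearr b n" using rc' aux_half by blast
    then have "r < c * dec_rearr b n" using c by (simp add: pos_divide_less_eq mult.commute)
    then have "ennreal r < ennreal (real n powr ie * dec_rearr b n)"
      using r unfolding c_def by (simp add: ennreal_less_iff)
    then show "ennreal r < lorentz_norm p q b" unfolding N[OF bb] less_SUP_iff using n(1) by blast
  qed
next
  case False
  define qr where "qr = real_of_ereal q"
  have qr: "1 \<le> qr" using q_real[OF q False] qr_def by simp
  define ie where "ie = inv_exp p"
  define c where "c n = real (Suc n) powr (qr * ie - 1)" for n
  have c: "0 < c n" for n unfolding c_def by simp
  define s where "s b = (\<Sum>n. ennreal (dec_rearr b (Suc n) powr qr * c n))" for b
  have N: "\<And>b. bddA b \<Longrightarrow> lorentz_norm p q b = (if s b = \<infinity> then \<infinity> else ennreal (enn2real (s b) powr (1 / qr)))"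
    using False unfolding lorentz_norm_def bddA_def ie_def s_def c_def qr_def by (simp add: Let_def)
  have sa: "ennreal (r powr qr) < s a"
  proof (cases "s a = \<infinity>")
    case True then show ?thesis by simp
  next
    case F: False
    have "r < enn2real (s a) powr (1 / qr)" using gt F r unfolding N[OF ba] by (simp add: ennreal_less_iff)
    then have "r powr qr < (enn2real (s a) powr (1 / qr)) powr qr" using r qr by (intro powr_less_mono2) auto
    also have "\<dots> = enn2real (s a)" using qr by (simp add: powr_powr)
    finally have "ennreal (r powr qr) < ennreal (enn2real (s a))" using r by (simp add: ennreal_less_iff)
    then show ?thesis using F by (simp add: ennreal_enn2real_if)
  qed
  then obtain M where M: "ennreal (r powr qr) < (\<Sum>n<M. ennreal (dec_rearr a (Suc n) powr qr * c n))"
    unfolding s_def suminf_eq_SUP less_SUP_iff by blast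
  define T where "T e = (\<Sum>n<M. max (dec_rearr a (Suc n) - e) 0 powr qr * c n)" for e
  have T0: "T 0 = (\<Sum>n<M. dec_rearr a (Suc n) powr qr * c n)"
    unfolding T_def using dec_nonneg[OF ba] by (intro sum.cong refl) (simp add: max_absorb1)
  have "(\<Sum>n<M. ennreal (dec_rearr a (Suc n) powr qr * c n)) = ennreal (T 0)"
    unfolding T0 using c by (intro sum_ennreal) (auto intro!: mult_nonneg_nonneg simp: less_imp_le)
  with M have rT: "r powr qr < T 0" using r by (simp add: ennreal_less_iff)
  have "(T \<longlongrightarrow> T 0) (at_right 0)"
    unfolding T_def using qr
    by (intro tendsto_intros tendsto_powr') (auto intro!: always_eventually)
  then have "eventually (\<lambda>e. r powr qr < T e) (at_right 0)" using rT by (rule order_tendstoD)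
  then obtain b0 where b0: "b0 > 0" "\<And>e. 0 < e \<Longrightarrow> e < b0 \<Longrightarrow> r powr qr < T e"
    unfolding eventually_at_right_field by auto
  define \<epsilon> where "\<epsilon> = b0 / 2"
  have e: "0 < \<epsilon>" "r powr qr < T \<epsilon>" using b0 unfolding \<epsilon>_def by auto
  show ?thesis
  proof (intro exI[of _ \<epsilon>] conjI allI impI e)
    fix b assume bb: "bddA b" and le: "\<forall>n\<ge>1. dec_rearr a n - \<epsilon> \<le> dec_rearr b n"
    have "ennreal (T \<epsilon>) = (\<Sum>n<M. ennreal (max (dec_rearr a (Suc n) - \<epsilon>) 0 powr qr * c n))"
      unfolding T_def using c by (intro sum_ennreal[symmetric]) (auto intro!: mult_nonneg_nonneg simp: less_imp_le)
    also have "\<dots> \<le> (\<Sum>n<M. ennreal (dec_rearr b (Suc n) powr qr * c n))"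
    proof (intro sum_mono ennreal_leI mult_right_mono powr_mono2)
      fix n
      show "max (dec_rearr a (Suc n) - \<epsilon>) 0 \<le> dec_rearr b (Suc n)"
        using le dec_nonneg[OF bb] by (metis max.boundedI le_add1 plus_1_eq_Suc)
    qed (use qr c in \<open>auto intro: less_imp_le\<close>)
    also have "\<dots> \<le> s b" unfolding s_def by (rule sum_le_suminf) auto
    finally have sT: "ennreal (T \<epsilon>) \<le> s b" .
    have "ennreal (r powr qr) < ennreal (T \<epsilon>)" using e(2) by (simp add: ennreal_less_iff)
    then have sb: "ennreal (r powr qr) < s b" using sT by (rule order_less_le_trans)
    show "ennreal r < lorentz_norm p q b"
    proof (cases "s b = \<infinity>")
      case True then show ?thesis unfolding N[OF bb] by simp
    next
      case F: False
      have "ennreal (r powr qr) < ennreal (enn2real (s b))" using sb F by (simp add: ennreal_enn2real_if)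
      then have "r powr qr < enn2real (s b)" by (simp add: ennreal_less_iff)
      then have "(r powr qr) powr (1 / qr) < enn2real (s b) powr (1 / qr)"
        using qr by (intro powr_less_mono2) auto
      then have "r < enn2real (s b) powr (1 / qr)" using r qr by (simp add: powr_powr)
      then show ?thesis unfolding N[OF bb] using F r by (simp add: ennreal_less_iff)
    qed
  qed
qed


lemma dec_zero: "dec_rearr (\<lambda>_. 0) n = 0"
proof -
  have "{\<omega>::real. \<omega> > 0 \<and> finite {k::nat. \<bar>0::real\<bar> > \<omega>} \<and> card {k::nat. \<bar>0::real\<bar> > \<omega>} \<le> n - 1} = {0<..}"
    by auto
  then show ?thesis unfolding dec_rearr_def by simp
qed

lemma zero_space: "(\<lambda>_::nat. 0::real) \<in> lorentz_space p q"
proof -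
  have b: "bdd_above (range (\<lambda>k. \<bar>(\<lambda>_::nat. 0::real) k\<bar>))" by simp
  have d: "dec_rearr (\<lambda>_::nat. 0::real) n = 0" for n using dec_zero by simp
  show ?thesis unfolding lorentz_space_def lorentz_norm_def using b d by (simp add: Let_def)
qed

theorem mainTheorem12:
  fixes p1 p2 q1 q2 :: ereal
  assumes "0 < p1" and "p1 < p2"
    and "1 \<le> q1" and "1 \<le> q2"
    and "min p2 q2 < \<infinity>"
  shows "emb_alpha p1 q1 p2 q2 = emb_norm p1 q1 p2 q2"
proof -
  have p2: "0 < p2" using assms(1,2) by auto
  define S where "S = {ennreal r | r. r > 0 \<and>
      (\<exists>F. finite F \<and> F \<noteq> {} \<and> F \<subseteq> lorentz_space p2 q2 \<and>
         lorentz_ball p1 q1 \<subseteq> (\<Union>y\<in>F. {x. lorentz_norm p2 q2 (x - y) \<le> ennreal r}))}"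
  have alpha: "emb_alpha p1 q1 p2 q2 = Inf S" unfolding emb_alpha_def S_def ..
  have ge: "emb_norm p1 q1 p2 q2 \<le> Inf S"
  proof (rule Inf_greatest)
    fix z assume "z \<in> S"
    then obtain r F where r: "z = ennreal r" "0 < r" "finite F" "F \<subseteq> lorentz_space p2 q2"
      "lorentz_ball p1 q1 \<subseteq> (\<Union>y\<in>F. {x. lorentz_norm p2 q2 (x - y) \<le> ennreal r})"
      unfolding S_def by blast
    show "emb_norm p1 q1 p2 q2 \<le> z" unfolding emb_norm_def r(1)
    proof (rule SUP_least)
      fix x assume xb: "x \<in> lorentz_ball p1 q1"
      show "lorentz_norm p2 q2 x \<le> ennreal r"
      proof (rule ccontr)
        assume "\<not> lorentz_norm p2 q2 x \<le> ennreal r"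
        then have gt: "ennreal r < lorentz_norm p2 q2 x" by simp
        have "lorentz_norm p1 q1 x \<le> 1" using xb unfolding lorentz_ball_def by simp
        then have "lorentz_norm p1 q1 x < \<infinity>"
          using ennreal_one_less_top order_le_less_trans by (metis infinity_ennreal_def)
        then have bx: "bddA x" by (rule fin_bdd)
        obtain \<epsilon> where e: "\<epsilon> > 0" and E: "\<And>b. bddA b \<Longrightarrow> (\<forall>n\<ge>1. dec_rearr x n - \<epsilon> \<le> dec_rearr b n)
            \<Longrightarrow> ennreal r < lorentz_norm p2 q2 b"
          using lsc[OF bx gt r(2) assms(4)] by blast
        have fy: "finite {k. \<epsilon> < \<bar>y k\<bar>}" if "y \<in> F" for y
          using that r(4) by (intro tail_finite[OF _ p2 assms(4) assms(5) e]) (auto simp: lorentz_space_def)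
        have "finite (\<Union>y\<in>F. {k. \<epsilon> < \<bar>y k\<bar>})" using r(3) fy by simp
        then obtain N where N: "(\<Union>y\<in>F. {k. \<epsilon> < \<bar>y k\<bar>}) \<subseteq> {..<N}" using finite_nat_bounded by blast
        have yN: "\<bar>y k\<bar> \<le> \<epsilon>" if "y \<in> F" "N \<le> k" for y k
        proof (rule ccontr)
          assume "\<not> \<bar>y k\<bar> \<le> \<epsilon>"
          then have "k \<in> (\<Union>y\<in>F. {k. \<epsilon> < \<bar>y k\<bar>})" using that(1) by (auto simp: not_le)
          then show False using N that(2) by auto
        qed
        define xs where "xs = shiftN N x"
        have "xs \<in> lorentz_ball p1 q1" using xb shift_norm unfolding lorentz_ball_def xs_def by simp
        then obtain y where y: "y \<in> F" "lorentz_norm p2 q2 (xs - y) \<le> ennreal r" using r(5) by blast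
        define w where "w = xs - y"
        have bdy: "bddA y" using y(1) r(4) by (intro fin_bdd[of p2 q2]) (auto simp: lorentz_space_def)
        have bxs: "bddA xs" using bx shift_bdd unfolding xs_def by simp
        obtain B1 where B1: "\<And>k. \<bar>xs k\<bar> \<le> B1" using bxs unfolding bddA_def bdd_above_def by auto
        obtain B2 where B2: "\<And>k. \<bar>y k\<bar> \<le> B2" using bdy unfolding bddA_def bdd_above_def by auto
        have "\<bar>w k\<bar> \<le> B1 + B2" for k using B1[of k] B2[of k] unfolding w_def by auto
        then have bw: "bddA w" unfolding bddA_def by (auto intro!: bdd_aboveI)
        have "\<forall>n\<ge>1. dec_rearr x n - \<epsilon> \<le> dec_rearr w n"
        proof (intro allI impI)
          fix n :: nat assume "1 \<le> n"
          show "dec_rearr x n - \<epsilon> \<le> dec_rearr w n"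
          proof (rule dec_lower[OF bw])
            fix \<omega> :: real assume w0: "0 < \<omega>" and wf: "finite {k. \<omega> < \<bar>w k\<bar>}"
              and wc: "card {k. \<omega> < \<bar>w k\<bar>} \<le> n - 1"
            have sub: "(\<lambda>j. j + N) ` {j. \<omega> + \<epsilon> < \<bar>x j\<bar>} \<subseteq> {k. \<omega> < \<bar>w k\<bar>}"
            proof
              fix k assume "k \<in> (\<lambda>j. j + N) ` {j. \<omega> + \<epsilon> < \<bar>x j\<bar>}"
              then obtain j where j: "k = j + N" "\<omega> + \<epsilon> < \<bar>x j\<bar>" by auto
              have "\<bar>y k\<bar> \<le> \<epsilon>" using yN[OF y(1)] j(1) by simp
              moreover have "w k = x j - y k" unfolding w_def xs_def shiftN_def j(1) by simp
              ultimately show "k \<in> {k. \<omega> < \<bar>w k\<bar>}" using j(2) by auto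
            qed
            have inj: "inj_on (\<lambda>j. j + N) {j. \<omega> + \<epsilon> < \<bar>x j\<bar>}" by (simp add: inj_on_def)
            have fx: "finite {j. \<omega> + \<epsilon> < \<bar>x j\<bar>}"
              using finite_subset[OF sub wf] finite_image_iff[OF inj] by simp
            have "card {j. \<omega> + \<epsilon> < \<bar>x j\<bar>} \<le> card {k. \<omega> < \<bar>w k\<bar>}"
              by (rule card_inj_on_le[OF inj sub wf])
            then have "dec_rearr x n \<le> \<omega> + \<epsilon>" using fx wc e w0 by (intro dec_upper) auto
            then show "dec_rearr x n - \<epsilon> \<le> \<omega>" by simp
          qed
        qed
        then have "ennreal r < lorentz_norm p2 q2 w" using E bw by blast
        with y(2) show False unfolding w_def by simp
      qed
    qed
  qed
  have le: "Inf S \<le> emb_norm p1 q1 p2 q2"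
  proof (rule dense_ge)
    fix t assume t: "emb_norm p1 q1 p2 q2 < t"
    then obtain u where u: "emb_norm p1 q1 p2 q2 < u" "u < t" using dense by blast
    have "u \<noteq> top" using u(2) by auto
    then obtain r where ur: "u = ennreal r" "0 \<le> r" by (cases u rule: ennreal_cases) auto
    have "0 < u" using u(1) by (rule le_less_trans[OF zero_le])
    then have r0: "0 < r" using ur by simp
    have "\<exists>F. finite F \<and> F \<noteq> {} \<and> F \<subseteq> lorentz_space p2 q2 \<and>
         lorentz_ball p1 q1 \<subseteq> (\<Union>y\<in>F. {x. lorentz_norm p2 q2 (x - y) \<le> ennreal r})"
    proof (intro exI[of _ "{\<lambda>_::nat. 0::real}"] conjI)
      show "finite {\<lambda>_::nat. 0::real}" "{\<lambda>_::nat. 0::real} \<noteq> {}" by auto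
      show "{\<lambda>_::nat. 0::real} \<subseteq> lorentz_space p2 q2" using zero_space by auto
      show "lorentz_ball p1 q1 \<subseteq> (\<Union>y\<in>{\<lambda>_::nat. 0::real}. {x. lorentz_norm p2 q2 (x - y) \<le> ennreal r})"
      proof
        fix x assume "x \<in> lorentz_ball p1 q1"
        then have "lorentz_norm p2 q2 x \<le> emb_norm p1 q1 p2 q2" unfolding emb_norm_def by (rule SUP_upper)
        then have "lorentz_norm p2 q2 x \<le> ennreal r" using u(1) ur by simp
        then show "x \<in> (\<Union>y\<in>{\<lambda>_::nat. 0::real}. {x. lorentz_norm p2 q2 (x - y) \<le> ennreal r})"
          by (simp add: fun_diff_def)
      qed
    qed
    then have "ennreal r \<in> S" unfolding S_def using r0 by blast
    then have "Inf S \<le> ennreal r" by (rule Inf_lower)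
    then show "Inf S \<le> t" using u(2) ur by simp
  qed
  show ?thesis using alpha ge le by simp
qed

end
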